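(* For every nonempty caterpillar $S\subset\mathbb N$ and every $r\in\mathbb N$, \[ \{D\subset\delta(S): |D|=r\} = \{\delta(Y): Y\subset S,\ |Y|=r+1\}. \]
   Context: For $m\in\mathbb N$ let $d(m)$ be the finite set of integers with $m=\sum_{i\in d(m)}2^i$. For a finite $S\subset\mathbb N$ with $|S|\geq2$, $s(S)=\max\{i:\exists x,y\in S,\ i\in d(x)\setminus d(y)\}$ (the first splitting index); with $S_0=\{x\in S:s(S)\notin d(x)\}$, $S_1=\{x\in S:s(S)\in d(x)\}$, $(S_0,S_1)$ is the split of $S$. Caterpillars: the empty set and singletons are caterpillars; a finite $S$ with $|S|\geq 2$ and split $(S_0,S_1)$ is a caterpillar iff one of $S_0,S_1$ is a singleton and the other a caterpillar (every subset of a caterpillar is a caterpillar). For a caterpillar $S$, $\delta(S)=\{s(\{x,y\}):x,y\in S,\ x\neq y\}$. *)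

theory Defs
  imports Main
begin

definition d :: "nat \<Rightarrow> nat set" where
  "d m = {i. bit m i}"

text \<open>First splitting index of a finite set S with at least two elements.\<close>
definition s :: "nat set \<Rightarrow> nat" where
  "s S = Max {i. \<exists>x\<in>S. \<exists>y\<in>S. i \<in> d x - d y}"

definition split0 :: "nat set \<Rightarrow> nat set" where
  "split0 S = {x \<in> S. s S \<notin> d x}"

definition split1 :: "nat set \<Rightarrow> nat set" where
  "split1 S = {x \<in> S. s S \<in> d x}"

inductive caterpillar :: "nat set \<Rightarrow> bool" where
  cat_empty: "caterpillar {}"
| cat_single: "caterpillar {x}"
| cat_split: "\<lbrakk>finite S; card S \<ge> 2;
     (is_singleton (split0 S) \<and> caterpillar (split1 S)) \<or>
     (is_singleton (split1 S) \<and> caterpillar (split0 S))\<rbrakk> \<Longrightarrow> caterpillar S"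

definition delta :: "nat set \<Rightarrow> nat set" where
  "delta S = {s {x, y} | x y. x \<in> S \<and> y \<in> S \<and> x \<noteq> y}"

end

theory Submission
  imports Defs
begin

definition E :: "nat set \<Rightarrow> nat set" where
  "E S = {i. \<exists>x\<in>S. \<exists>y\<in>S. i \<in> d x - d y}"

lemma s_E: "s S = Max (E S)" by (simp add: s_def E_def)

lemma bit_lt: "bit (x::nat) i \<Longrightarrow> i < x"
proof -
  assume b: "bit x i"
  have "\<not> x < 2 ^ i"
  proof
    assume "x < 2 ^ i"
    then have "x div 2 ^ i = 0" by simp
    with b show False by (simp add: bit_iff_odd)
  qed
  then have "2 ^ i \<le> x" by simp
  moreover have "i < 2 ^ i" by (rule less_exp)
  ultimately show ?thesis by linarith
qed

lemma d_fin: "finite (d x)"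
  by (rule finite_subset[of _ "{..<x}"]) (auto simp: d_def bit_lt)

lemma E_fin: "finite S \<Longrightarrow> finite (E S)"
  by (rule finite_subset[of _ "\<Union> (d ` S)"]) (auto simp: E_def d_fin)

lemma E_mono: "S \<subseteq> T \<Longrightarrow> E S \<subseteq> E T"
  by (auto simp: E_def)

lemma E_pair_ne: "(x::nat) \<noteq> y \<Longrightarrow> E {x,y} \<noteq> {}"
proof -
  assume "x \<noteq> y"
  then obtain n where "bit x n \<noteq> bit y n" using bit_eq_iff by blast
  then have "n \<in> E {x,y}" by (auto simp: E_def d_def)
  then show ?thesis by auto
qed

lemma s_pair_in: "x \<noteq> y \<Longrightarrow> s {x,y} \<in> E {x,y}"
  unfolding s_E by (rule Max_in) (auto simp: E_fin E_pair_ne)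

lemma s_pair_le: "finite S \<Longrightarrow> x \<in> S \<Longrightarrow> y \<in> S \<Longrightarrow> x \<noteq> y \<Longrightarrow> s {x,y} \<le> s S"
  unfolding s_E
  by (rule Max_mono[OF E_mono E_pair_ne E_fin]) auto

lemma split_cross:
  assumes "finite S" "x \<in> S" "y \<in> S" "s S \<in> d y" "s S \<notin> d x"
  shows "s {x,y} = s S"
proof -
  have ne: "x \<noteq> y" using assms by auto
  have "s S \<in> E {x,y}" using assms by (auto simp: E_def)
  then have "s S \<le> s {x,y}" unfolding s_E[of "{x,y}"] by (rule Max_ge[OF E_fin, rotated]) simp
  with s_pair_le[OF assms(1-3) ne] show ?thesis by simp
qed

lemma split_same:
  assumes "finite S" "x \<in> S" "y \<in> S" "x \<noteq> y" "s S \<in> d x \<longleftrightarrow> s S \<in> d y"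
  shows "s {x,y} < s S"
proof -
  have "s {x,y} \<in> E {x,y}" using s_pair_in[OF assms(4)] .
  then have "s {x,y} \<noteq> s S" using assms(5) by (auto simp: E_def)
  with s_pair_le[OF assms(1-4)] show ?thesis by simp
qed

lemma delta_fin: "finite Y \<Longrightarrow> finite (delta Y)"
proof -
  assume f: "finite Y"
  have "delta Y \<subseteq> (\<lambda>(x,y). s {x,y}) ` (Y \<times> Y)" by (auto simp: delta_def)
  then show ?thesis using f by (meson finite_SigmaI finite_imageI finite_subset)
qed

lemma delta_mono: "Y \<subseteq> S \<Longrightarrow> delta Y \<subseteq> delta S"
  by (auto simp: delta_def)

lemma delta_insert:
  assumes "Y \<noteq> {}" "a \<notin> Y" "\<forall>y\<in>Y. s {a,y} = t"
  shows "delta (insert a Y) = insert t (delta Y)"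
proof
  show "delta (insert a Y) \<subseteq> insert t (delta Y)"
  proof
    fix i assume "i \<in> delta (insert a Y)"
    then obtain x y where xy: "i = s {x,y}" "x \<in> insert a Y" "y \<in> insert a Y" "x \<noteq> y"
      by (auto simp: delta_def)
    show "i \<in> insert t (delta Y)"
    proof (cases "x = a")
      case True then show ?thesis using xy assms by auto
    next
      case False
      show ?thesis
      proof (cases "y = a")
        case True then have "i = s {a,x}" using xy by (simp add: insert_commute)
        then show ?thesis using xy assms False by auto
      next
        case False2: False
        then show ?thesis using xy False by (auto simp: delta_def)
      qed
    qed
  qed
next
  obtain y where y: "y \<in> Y" using assms by auto
  have ay: "a \<noteq> y" using y assms(2) by auto
  have "s {a,y} \<in> delta (insert a Y)" unfolding delta_def using y ay by blast
  then have "t \<in> delta (insert a Y)" using assms(3) y by simp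
  moreover have "delta Y \<subseteq> delta (insert a Y)" by (rule delta_mono) auto
  ultimately show "insert t (delta Y) \<subseteq> delta (insert a Y)" by auto
qed

definition P :: "nat set \<Rightarrow> bool" where
  "P S \<longleftrightarrow> finite S \<and> (\<forall>Y. Y \<subseteq> S \<and> Y \<noteq> {} \<longrightarrow> card (delta Y) = card Y - 1)
     \<and> (\<forall>D. D \<subseteq> delta S \<longrightarrow> (\<exists>Y. Y \<subseteq> S \<and> card Y = card D + 1 \<and> delta Y = D))"

lemma step:
  assumes PB: "P B" and ne: "B \<noteq> {}" and aB: "a \<notin> B"
    and cross: "\<forall>y\<in>B. s {a,y} = t"
    and same: "\<forall>y\<in>B. \<forall>z\<in>B. y \<noteq> z \<longrightarrow> s {y,z} < t"
  shows "P (insert a B)"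
proof -
  have fB: "finite B" and P1: "\<And>Y. Y \<subseteq> B \<Longrightarrow> Y \<noteq> {} \<Longrightarrow> card (delta Y) = card Y - 1"
    and P2: "\<And>D. D \<subseteq> delta B \<Longrightarrow> \<exists>Y. Y \<subseteq> B \<and> card Y = card D + 1 \<and> delta Y = D"
    using PB unfolding P_def by blast+
  have tn: "t \<notin> delta Y" if YB: "Y \<subseteq> B" for Y
  proof
    assume "t \<in> delta Y"
    then obtain x y where xy: "t = s {x,y}" "x \<in> Y" "y \<in> Y" "x \<noteq> y"
      unfolding delta_def by blast
    then have "s {x,y} < t" using YB same by blast
    then show False using xy(1) by simp
  qed
  have di: "delta (insert a Y) = insert t (delta Y)" if "Y \<subseteq> B" "Y \<noteq> {}" for Y
    using delta_insert[of Y a t] that aB cross by auto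
  have Q1: "card (delta Y) = card Y - 1" if Y: "Y \<subseteq> insert a B" "Y \<noteq> {}" for Y
  proof (cases "a \<in> Y")
    case False
    then show ?thesis using P1[of Y] Y by auto
  next
    case True
    define Y' where "Y' = Y - {a}"
    have Y'B: "Y' \<subseteq> B" using Y Y'_def by auto
    have fY': "finite Y'" using Y'B fB by (rule finite_subset)
    have Yeq: "Y = insert a Y'" using True Y'_def by auto
    show ?thesis
    proof (cases "Y' = {}")
      case True
      then have "Y = {a}" using Yeq by simp
      then show ?thesis by (simp add: delta_def)
    next
      case False
      have "card (delta Y) = card (insert t (delta Y')) " using di[OF Y'B False] Yeq by simp
      also have "\<dots> = card (delta Y') + 1" using tn[OF Y'B] delta_fin[OF fY'] by simp
      also have "\<dots> = card Y' - 1 + 1" using P1[OF Y'B False] by simp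
      also have "\<dots> = card Y'" using False fY' by (simp add: card_gt_0_iff)
      also have "\<dots> = card Y - 1"
      proof -
        have "a \<notin> Y'" using Y'_def by simp
        then have "card (insert a Y') = Suc (card Y')" using fY' by simp
        then show ?thesis unfolding Yeq[symmetric] by simp
      qed
      finally show ?thesis .
    qed
  qed
  have dS: "delta (insert a B) = insert t (delta B)" using di[OF _ ne] by simp
  have Q2: "\<exists>Y. Y \<subseteq> insert a B \<and> card Y = card D + 1 \<and> delta Y = D"
    if D: "D \<subseteq> delta (insert a B)" for D
  proof (cases "t \<in> D")
    case False
    have "D \<subseteq> insert t (delta B)" using D dS by simp
    then have "D \<subseteq> delta B" using False by blast
    then have "\<exists>Y. Y \<subseteq> B \<and> card Y = card D + 1 \<and> delta Y = D" by (rule P2)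
    then obtain Y where Y: "Y \<subseteq> B" "card Y = card D + 1" "delta Y = D" by (elim exE conjE)
    have "Y \<subseteq> insert a B" using Y(1) by blast
    then show ?thesis using Y(2,3) by blast
  next
    case True
    have "finite (delta (insert a B))" using fB by (simp add: delta_fin)
    then have fD: "finite D" using D by (rule finite_subset[rotated])
    have "D - {t} \<subseteq> delta B" using D dS by auto
    then have "\<exists>Y. Y \<subseteq> B \<and> card Y = card (D - {t}) + 1 \<and> delta Y = D - {t}" by (rule P2)
    then obtain Y' where Y': "Y' \<subseteq> B" "card Y' = card (D - {t}) + 1" "delta Y' = D - {t}"
      by (elim exE conjE)
    have Y'ne: "Y' \<noteq> {}" using Y'(2) by (metis card.empty zero_neq_one add_is_0 add_cancel_right_left)
    have fY': "finite Y'" using Y'(1) fB by (rule finite_subset)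
    have "insert t (D - {t}) = D" using True by blast
    then have "delta (insert a Y') = D" using di[OF Y'(1) Y'ne] Y'(3) by simp
    moreover have "card (insert a Y') = card D + 1"
    proof -
      have aY': "a \<notin> Y'" using Y'(1) aB by blast
      have c1: "card (insert a Y') = Suc (card Y')" using fY' aY' by simp
      have c2: "card D = Suc (card (D - {t}))" using fD True by (rule card_Suc_Diff1[symmetric])
      show ?thesis using c1 c2 Y'(2) by simp
    qed
    moreover have "insert a Y' \<subseteq> insert a B" using Y'(1) by blast
    ultimately show ?thesis by blast
  qed
  show ?thesis unfolding P_def
  proof (intro conjI allI impI)
    show "finite (insert a B)" using fB by simp
  next
    fix Y assume "Y \<subseteq> insert a B \<and> Y \<noteq> {}"
    then show "card (delta Y) = card Y - 1" using Q1 by blast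
  next
    fix D assume "D \<subseteq> delta (insert a B)"
    then show "\<exists>Y. Y \<subseteq> insert a B \<and> card Y = card D + 1 \<and> delta Y = D" by (rule Q2)
  qed
qed

lemma main: "caterpillar S \<Longrightarrow> S \<noteq> {} \<Longrightarrow> P S"
proof (induction rule: caterpillar.induct)
  case cat_empty
  then show ?case by simp
next
  case (cat_single x)
  have dx: "delta {x} = {}" by (simp add: delta_def)
  show ?case unfolding P_def
  proof (intro conjI allI impI)
    fix Y assume "Y \<subseteq> {x} \<and> Y \<noteq> {}"
    then have "Y = {x}" by auto
    then show "card (delta Y) = card Y - 1" using dx by simp
  next
    fix D assume "D \<subseteq> delta {x}"
    then have "D = {}" using dx by auto
    then show "\<exists>Y. Y \<subseteq> {x} \<and> card Y = card D + 1 \<and> delta Y = D" using dx by auto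
  qed simp
next
  case (cat_split S)
  let ?t = "s S"
  have S01: "S = split0 S \<union> split1 S" "split0 S \<inter> split1 S = {}"
    by (auto simp: split0_def split1_def)
  have gen: "P S" if sing: "is_singleton A" and PB: "caterpillar B" and
      IH: "B \<noteq> {} \<Longrightarrow> P B" and AB: "S = A \<union> B" "A \<inter> B = {}"
      and cr: "\<And>x y. x \<in> A \<Longrightarrow> y \<in> B \<Longrightarrow> s {x,y} = ?t"
      and sm: "\<And>y z. y \<in> B \<Longrightarrow> z \<in> B \<Longrightarrow> y \<noteq> z \<Longrightarrow> s {y,z} < ?t" for A B
  proof -
    obtain a where A: "A = {a}" using sing by (auto simp: is_singleton_def)
    have Bne: "B \<noteq> {}"
    proof
      assume "B = {}"
      then have "S = {a}" using AB A by simp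
      then show False using cat_split.hyps(2) by simp
    qed
    have "P (insert a B)"
      by (rule step[OF IH[OF Bne] Bne]) (use AB A cr sm in auto)
    then show ?thesis using AB A by simp
  qed
  have fS: "finite S" by (rule cat_split.hyps(1))
  have cr0: "s {x,y} = ?t" if "x \<in> split0 S" "y \<in> split1 S" for x y
    using that split_cross[OF fS, of x y] by (simp add: split0_def split1_def)
  have cr1: "s {x,y} = ?t" if "x \<in> split1 S" "y \<in> split0 S" for x y
    using cr0[OF that(2,1)] by (simp add: insert_commute)
  have sm0: "s {y,z} < ?t" if "y \<in> split0 S" "z \<in> split0 S" "y \<noteq> z" for y z
    using that split_same[OF fS, of y z] by (simp add: split0_def)
  have sm1: "s {y,z} < ?t" if "y \<in> split1 S" "z \<in> split1 S" "y \<noteq> z" for y z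
    using that split_same[OF fS, of y z] by (simp add: split1_def)
  have S10: "S = split1 S \<union> split0 S" "split1 S \<inter> split0 S = {}" using S01 by auto
  from cat_split.IH show ?case
  proof
    assume h: "is_singleton (split0 S) \<and> caterpillar (split1 S) \<and> (split1 S \<noteq> {} \<longrightarrow> P (split1 S))"
    show ?thesis
    proof (rule gen[of "split0 S" "split1 S", OF _ _ _ S01 cr0 sm1])
      show "is_singleton (split0 S)" using h by blast
      show "caterpillar (split1 S)" using h by blast
      show "P (split1 S)" if "split1 S \<noteq> {}" using h that by blast
    qed
  next
    assume h: "is_singleton (split1 S) \<and> caterpillar (split0 S) \<and> (split0 S \<noteq> {} \<longrightarrow> P (split0 S))"
    show ?thesis
    proof (rule gen[of "split1 S" "split0 S", OF _ _ _ S10 cr1 sm0])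
      show "is_singleton (split1 S)" using h by blast
      show "caterpillar (split0 S)" using h by blast
      show "P (split0 S)" if "split0 S \<noteq> {}" using h that by blast
    qed
  qed
qed

theorem mainTheorem6:
  fixes S :: "nat set" and r :: nat
  assumes "caterpillar S" and "S \<noteq> {}"
  shows "{D. D \<subseteq> delta S \<and> finite D \<and> card D = r}
         = {delta Y | Y. Y \<subseteq> S \<and> finite Y \<and> card Y = r + 1}"
proof -
  have PS: "P S" using main assms by blast
  then have fS: "finite S" by (simp add: P_def)
  show ?thesis
  proof (intro equalityI subsetI)
    fix D assume "D \<in> {D. D \<subseteq> delta S \<and> finite D \<and> card D = r}"
    then have D: "D \<subseteq> delta S" "card D = r" by auto
    then obtain Y where "Y \<subseteq> S" "card Y = card D + 1" "delta Y = D"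
      using PS unfolding P_def by blast
    then show "D \<in> {delta Y | Y. Y \<subseteq> S \<and> finite Y \<and> card Y = r + 1}"
      using D fS finite_subset by blast
  next
    fix D assume "D \<in> {delta Y | Y. Y \<subseteq> S \<and> finite Y \<and> card Y = r + 1}"
    then obtain Y where Y: "D = delta Y" "Y \<subseteq> S" "finite Y" "card Y = r + 1" by auto
    then have "Y \<noteq> {}" by auto
    then have "card (delta Y) = r" using PS Y unfolding P_def by auto
    then show "D \<in> {D. D \<subseteq> delta S \<and> finite D \<and> card D = r}"
      using Y delta_mono delta_fin by auto
  qed
qed

end
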